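(* In the model of the context, if the lead time is deterministic, $L_t=L$ for all $t$ with a constant integer $L\ge0$, then $$BM=\left(\frac{2L^2}{n^2}+\frac{2L}{n}\right)(1-\rho^n)+1 .$$
   Context: Model. Fix $\mu_D\in\mathbb{R}$, $\rho\in(-1,1)$, and an i.i.d. sequence $(\epsilon_t)_{t\in\mathbb{Z}}$ with $E\epsilon_t=0$, $\operatorname{Var}\epsilon_t=\sigma^2\in(0,\infty)$. The demand $(D_t)$ is the stationary AR(1) process $D_t=\mu_D+\rho(D_{t-1}-\mu_D)+\epsilon_t$. Fix an integer $L^+\ge 0$ and integers $n,m\ge1$. Lead times $(L_t)$ take values in $\{0,\dots,L^+\}$. Forecasts: $\widehat{D}_t=\frac1n\sum_{i=1}^n D_{t-i}$, $\widehat{L}_t=\frac1m\sum_{i=1}^m L_{t-i-L^+}$; order $q_t=\widehat{L}_t\widehat{D}_t-\widehat{L}_{t-1}\widehat{D}_{t-1}+D_{t-1}$; $BM=\operatorname{Var}q_t/\operatorname{Var}D_t$. *)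

theory Defs
  imports "HOL-Probability.Probability"
begin

definition cov :: "'a measure \<Rightarrow> ('a \<Rightarrow> real) \<Rightarrow> ('a \<Rightarrow> real) \<Rightarrow> real" where
  "cov M X Y = integral\<^sup>L M (\<lambda>\<omega>. (X \<omega> - integral\<^sup>L M X) * (Y \<omega> - integral\<^sup>L M Y))"

definition weakly_stationary :: "'a measure \<Rightarrow> (int \<Rightarrow> 'a \<Rightarrow> real) \<Rightarrow> bool" where
  "weakly_stationary M X \<longleftrightarrow>
     (\<forall>t. X t \<in> borel_measurable M \<and> integrable M (\<lambda>\<omega>. (X t \<omega>)\<^sup>2)) \<and>
     (\<forall>s t. integral\<^sup>L M (X s) = integral\<^sup>L M (X t)) \<and>
     (\<forall>s t h. cov M (X (s + h)) (X s) = cov M (X (t + h)) (X t))"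

definition Dhat :: "nat \<Rightarrow> (int \<Rightarrow> 'a \<Rightarrow> real) \<Rightarrow> int \<Rightarrow> 'a \<Rightarrow> real" where
  "Dhat n D t \<omega> = (1 / real n) * (\<Sum>i=1..n. D (t - int i) \<omega>)"

definition Lhat :: "nat \<Rightarrow> nat \<Rightarrow> (int \<Rightarrow> 'a \<Rightarrow> nat) \<Rightarrow> int \<Rightarrow> 'a \<Rightarrow> real" where
  "Lhat m Lplus Lt t \<omega> = (1 / real m) * (\<Sum>i=1..m. real (Lt (t - int i - int Lplus) \<omega>))"

definition order_q :: "nat \<Rightarrow> nat \<Rightarrow> nat \<Rightarrow> (int \<Rightarrow> 'a \<Rightarrow> real) \<Rightarrow> (int \<Rightarrow> 'a \<Rightarrow> nat) \<Rightarrow> int \<Rightarrow> 'a \<Rightarrow> real" where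
  "order_q n m Lplus D Lt t \<omega> =
     Lhat m Lplus Lt t \<omega> * Dhat n D t \<omega> - Lhat m Lplus Lt (t - 1) \<omega> * Dhat n D (t - 1) \<omega> + D (t - 1) \<omega>"

end

theory Submission imports Defs begin

context prob_space begin

definition l2 :: "('a \<Rightarrow> real) \<Rightarrow> bool" where
  "l2 X \<longleftrightarrow> X \<in> borel_measurable M \<and> integrable M (\<lambda>\<omega>. (X \<omega>)\<^sup>2)"

lemma l2_int: "l2 X \<Longrightarrow> integrable M X"
  unfolding l2_def by (blast dest: square_integrable_imp_integrable)

lemma l2_prod: assumes "l2 X" "l2 Y" shows "integrable M (\<lambda>\<omega>. X \<omega> * Y \<omega>)"
proof (rule Bochner_Integration.integrable_bound[where f="\<lambda>\<omega>. (X \<omega>)\<^sup>2 + (Y \<omega>)\<^sup>2"])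
  show "integrable M (\<lambda>\<omega>. (X \<omega>)\<^sup>2 + (Y \<omega>)\<^sup>2)" using assms unfolding l2_def by auto
  show "(\<lambda>\<omega>. X \<omega> * Y \<omega>) \<in> borel_measurable M" using assms unfolding l2_def by auto
  show "AE x in M. norm (X x * Y x) \<le> norm ((X x)\<^sup>2 + (Y x)\<^sup>2)"
  proof (rule AE_I2)
    fix x
    have "0 \<le> (\<bar>X x\<bar> - \<bar>Y x\<bar>)\<^sup>2" by simp
    then have h: "2 * (\<bar>X x\<bar> * \<bar>Y x\<bar>) \<le> (X x)\<^sup>2 + (Y x)\<^sup>2"
      by (simp add: power2_eq_square algebra_simps)
    have "0 \<le> \<bar>X x\<bar> * \<bar>Y x\<bar>" by simp
    moreover have "norm ((X x)\<^sup>2 + (Y x)\<^sup>2) = (X x)\<^sup>2 + (Y x)\<^sup>2" by simp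
    moreover have "norm (X x * Y x) = \<bar>X x\<bar> * \<bar>Y x\<bar>" by (simp add: abs_mult)
    ultimately show "norm (X x * Y x) \<le> norm ((X x)\<^sup>2 + (Y x)\<^sup>2)" using h by linarith
  qed
qed

lemma l2_lin: assumes "l2 X" "l2 Y" shows "l2 (\<lambda>\<omega>. c + a * X \<omega> + b * Y \<omega>)"
proof -
  have e: "(\<lambda>\<omega>. (c + a * X \<omega> + b * Y \<omega>)\<^sup>2) = (\<lambda>\<omega>. c\<^sup>2 + a\<^sup>2 * (X \<omega>)\<^sup>2 + b\<^sup>2 * (Y \<omega>)\<^sup>2
     + (2*a*c) * X \<omega> + (2*b*c) * Y \<omega> + (2*a*b) * (X \<omega> * Y \<omega>))"
    by (rule ext) (simp add: power2_eq_square algebra_simps)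
  have i: "integrable M X" "integrable M Y" using assms l2_int by auto
  have p: "integrable M (\<lambda>\<omega>. X \<omega> * Y \<omega>)" using l2_prod assms by auto
  show ?thesis using assms i p unfolding l2_def e by auto
qed

lemma cov_eq: assumes "l2 X" "l2 Y"
  shows "cov M X Y = expectation (\<lambda>\<omega>. X \<omega> * Y \<omega>) - expectation X * expectation Y"
proof -
  have i: "integrable M X" "integrable M Y" using assms l2_int by auto
  have p: "integrable M (\<lambda>\<omega>. X \<omega> * Y \<omega>)" using l2_prod assms by auto
  have e: "(\<lambda>\<omega>. (X \<omega> - expectation X) * (Y \<omega> - expectation Y)) =
     (\<lambda>\<omega>. X \<omega> * Y \<omega> - expectation Y * X \<omega> - expectation X * Y \<omega> + expectation X * expectation Y)"
    by (rule ext) (simp add: algebra_simps)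
  show ?thesis unfolding cov_def e using i p prob_space by (simp add: algebra_simps)
qed

lemma cov_lin: assumes "l2 X" "l2 Y" "l2 Z"
  shows "cov M (\<lambda>\<omega>. c + a * X \<omega> + b * Y \<omega>) Z = a * cov M X Z + b * cov M Y Z"
proof -
  have i: "integrable M X" "integrable M Y" "integrable M Z" using assms l2_int by auto
  have p: "integrable M (\<lambda>\<omega>. X \<omega> * Z \<omega>)" "integrable M (\<lambda>\<omega>. Y \<omega> * Z \<omega>)"
    using l2_prod assms by auto
  have e: "(\<lambda>\<omega>. (c + a * X \<omega> + b * Y \<omega>) * Z \<omega>) = (\<lambda>\<omega>. c * Z \<omega> + a * (X \<omega> * Z \<omega>) + b * (Y \<omega> * Z \<omega>))"
    by (rule ext) (simp add: algebra_simps)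
  show ?thesis
    apply (subst cov_eq[OF l2_lin[OF assms(1,2)] assms(3)])
    apply (simp add: cov_eq assms e i p prob_space)
    apply (simp add: algebra_simps)
    done
qed

lemma cov_sym: "cov M X Y = cov M Y X"
  unfolding cov_def by (simp add: mult.commute)

lemma cov_nonneg: "cov M X X \<ge> 0"
  unfolding cov_def by simp

lemma var_cov: "variance X = cov M X X"
  unfolding cov_def by (simp add: power2_eq_square)

lemma cov_bound: assumes "l2 X" "l2 Y" shows "\<bar>cov M X Y\<bar> \<le> (cov M X X + cov M Y Y) / 2"
proof -
  define P where "P = (\<lambda>\<omega>. 0 + 1 * X \<omega> + 1 * Y \<omega>)"
  define Q where "Q = (\<lambda>\<omega>. 0 + 1 * X \<omega> + (-1) * Y \<omega>)"
  have lp: "l2 P" and lm: "l2 Q" unfolding P_def Q_def using l2_lin assms by blast+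
  have a1: "cov M P P = cov M X P + cov M Y P" using cov_lin[OF assms lp, of 0 1 1] unfolding P_def by simp
  have a2: "cov M P X = cov M X X + cov M Y X" using cov_lin[OF assms assms(1), of 0 1 1] unfolding P_def by simp
  have a3: "cov M P Y = cov M X Y + cov M Y Y" using cov_lin[OF assms assms(2), of 0 1 1] unfolding P_def by simp
  have b1: "cov M Q Q = cov M X Q - cov M Y Q" using cov_lin[OF assms lm, of 0 1 "-1"] unfolding Q_def by simp
  have b2: "cov M Q X = cov M X X - cov M Y X" using cov_lin[OF assms assms(1), of 0 1 "-1"] unfolding Q_def by simp
  have b3: "cov M Q Y = cov M X Y - cov M Y Y" using cov_lin[OF assms assms(2), of 0 1 "-1"] unfolding Q_def by simp
  have s: "cov M X P = cov M P X" "cov M Y P = cov M P Y" "cov M X Q = cov M Q X" "cov M Y Q = cov M Q Y"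
     "cov M Y X = cov M X Y" using cov_sym by blast+
  have n: "0 \<le> cov M P P" "0 \<le> cov M Q Q" by (rule cov_nonneg)+
  have pp: "cov M P P = cov M X X + 2 * cov M X Y + cov M Y Y" using a1 a2 a3 s by simp
  have qq: "cov M Q Q = cov M X X - 2 * cov M X Y + cov M Y Y" using b1 b2 b3 s by simp
  have "cov M X Y \<le> (cov M X X + cov M Y Y) / 2"
    using pp qq n by (auto simp: field_simps)
  moreover have "- cov M X Y \<le> (cov M X X + cov M Y Y) / 2"
    using pp qq n by (auto simp: field_simps)
  ultimately show ?thesis by (simp add: abs_le_iff)
qed

lemma cov_AE: assumes "AE \<omega> in M. X \<omega> = Y \<omega>" "X \<in> borel_measurable M" "Y \<in> borel_measurable M"
    "Z \<in> borel_measurable M"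
  shows "cov M X Z = cov M Y Z"
proof -
  have e: "integral\<^sup>L M X = integral\<^sup>L M Y" using assms by (intro integral_cong_AE) auto
  show ?thesis unfolding cov_def e
    by (rule integral_cong_AE) (use assms in auto)
qed

end

lemma tele: "(\<Sum>i=1..n. f i) - (\<Sum>i=1..n. f (Suc i)) = f 1 - (f (Suc n) :: real)"
  by (induction n) auto

theorem mainTheorem5:
  fixes M :: "'a measure"
    and D eps :: "int \<Rightarrow> 'a \<Rightarrow> real"
    and Lt :: "int \<Rightarrow> 'a \<Rightarrow> nat"
    and muD rho sigma :: real
    and Lplus n m L :: nat
    and t :: int
  assumes M: "prob_space M"
    and rho: "-1 < rho" "rho < 1"
    and eps_meas: "\<And>s. eps s \<in> borel_measurable M"
    and eps_indep: "prob_space.indep_vars M (\<lambda>_. borel) eps UNIV"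
    and eps_ident: "\<And>s u. distr M borel (eps s) = distr M borel (eps u)"
    and eps_sq: "\<And>s. integrable M (\<lambda>\<omega>. (eps s \<omega>)\<^sup>2)"
    and eps_mean: "\<And>s. prob_space.expectation M (eps s) = 0"
    and eps_var: "\<And>s. prob_space.variance M (eps s) = sigma\<^sup>2"
    and sigma: "sigma > 0"
    and D_stat: "weakly_stationary M D"
    and D_ar: "\<And>s. AE \<omega> in M. D s \<omega> = muD + rho * (D (s - 1) \<omega> - muD) + eps s \<omega>"
    and n: "n \<ge> 1" and m: "m \<ge> 1"
    and Lt_range: "\<And>s \<omega>. Lt s \<omega> \<le> Lplus"
    and Lt_det: "\<And>s \<omega>. Lt s \<omega> = L"
  shows "prob_space.variance M (order_q n m Lplus D Lt t) / prob_space.variance M (D t)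
           = (2 * real L ^ 2 / real n ^ 2 + 2 * real L / real n) * (1 - rho ^ n) + 1"
proof -
  interpret P: prob_space M by (rule M)
  have Dm: "\<And>s. D s \<in> borel_measurable M" using D_stat unfolding weakly_stationary_def by auto
  have lD: "\<And>s. P.l2 (D s)" using D_stat unfolding weakly_stationary_def P.l2_def by auto
  have le: "\<And>s. P.l2 (eps s)" using eps_meas eps_sq unfolding P.l2_def by auto
  have stat: "\<And>s t h. cov M (D (s + h)) (D s) = cov M (D (t + h)) (D t)"
    using D_stat unfolding weakly_stationary_def by blast
  define g0 where "g0 = cov M (D 0) (D 0)"
  have g0s: "\<And>s. cov M (D s) (D s) = g0" unfolding g0_def using stat[of _ 0 0] by simp
  have ceps: "cov M (eps s) (eps u) = 0" if "s \<noteq> u" for s u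
  proof -
    have iv: "P.indep_vars (\<lambda>_. borel) eps (insert s {u})"
      by (rule P.indep_vars_subset[OF eps_indep]) auto
    have "P.indep_var borel (eps s) borel (\<lambda>\<omega>. \<Sum>i\<in>{u}. eps i \<omega>)"
      by (rule P.indep_vars_sum) (use that iv in auto)
    then have ind: "P.indep_var borel (eps s) borel (eps u)" by simp
    have "P.expectation (\<lambda>\<omega>. eps s \<omega> * eps u \<omega>) = P.expectation (eps s) * P.expectation (eps u)"
      by (rule P.indep_var_lebesgue_integral[OF ind]) (use le P.l2_int in auto)
    then show ?thesis using P.cov_eq[OF le le] eps_mean by simp
  qed
  have ceps2: "cov M (eps s) (eps s) = sigma\<^sup>2" for s using eps_var P.var_cov by simp
  have ar: "cov M (D s) Z = rho * cov M (D (s - 1)) Z + cov M (eps s) Z" if "P.l2 Z" for s Z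
  proof -
    have "cov M (D s) Z = cov M (\<lambda>\<omega>. (muD - rho * muD) + rho * D (s - 1) \<omega> + 1 * eps s \<omega>) Z"
      by (rule P.cov_AE) (use D_ar[of s] Dm eps_meas that in \<open>auto simp: P.l2_def algebra_simps\<close>)
    also have "\<dots> = rho * cov M (D (s - 1)) Z + cov M (eps s) Z"
      using P.cov_lin[OF lD le that, of "muD - rho * muD" rho "s - 1" 1 s] by simp
    finally show ?thesis .
  qed
  define B where "B = (sigma\<^sup>2 + g0) / 2"
  have bnd: "\<bar>cov M (eps s) (D u)\<bar> \<le> B" for s u
    using P.cov_bound[OF le lD, of s u] ceps2 g0s unfolding B_def by simp
  have iter: "cov M (eps s) (D u) = rho ^ K * cov M (eps s) (D (u - int K))" if "u < s" for s u K
  proof (induction K)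
    case 0 then show ?case by simp
  next
    case (Suc K)
    have "cov M (eps s) (D (u - int K)) = cov M (D (u - int K)) (eps s)" by (rule P.cov_sym)
    also have "\<dots> = rho * cov M (D (u - int K - 1)) (eps s) + cov M (eps (u - int K)) (eps s)"
      by (rule ar[OF le])
    also have "cov M (eps (u - int K)) (eps s) = 0" using ceps that by simp
    finally have "cov M (eps s) (D (u - int K)) = rho * cov M (eps s) (D (u - int (Suc K)))"
      using P.cov_sym[of "D (u - int K - 1)" "eps s"] by (simp add: algebra_simps)
    then show ?case using Suc by simp
  qed
  have orth: "cov M (eps s) (D u) = 0" if "u < s" for s u
  proof -
    define c where "c = cov M (eps s) (D u)"
    have lim: "(\<lambda>K. \<bar>rho\<bar> ^ K * B) \<longlonglongrightarrow> 0"
      using rho by (intro tendsto_mult_left_zero LIMSEQ_power_zero) auto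
    have "\<bar>c\<bar> \<le> \<bar>rho\<bar> ^ K * B" for K
    proof -
      have "\<bar>c\<bar> = \<bar>rho\<bar> ^ K * \<bar>cov M (eps s) (D (u - int K))\<bar>"
        unfolding c_def iter[OF that, of K] by (simp add: abs_mult power_abs)
      also have "\<dots> \<le> \<bar>rho\<bar> ^ K * B" by (intro mult_left_mono bnd) auto
      finally show ?thesis .
    qed
    then have "\<bar>c\<bar> \<le> 0" by (intro LIMSEQ_le_const[OF lim]) auto
    then show ?thesis unfolding c_def by simp
  qed
  have gam: "cov M (D s) (D (s - int h)) = rho ^ h * g0" for h s
  proof (induction h arbitrary: s)
    case 0 then show ?case using g0s by simp
  next
    case (Suc h)
    have "cov M (D s) (D (s - int (Suc h))) = rho * cov M (D (s - 1)) (D (s - 1 - int h)) + cov M (eps s) (D (s - int (Suc h)))"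
      using ar[OF lD, of s "s - int (Suc h)"] by (simp add: algebra_simps)
    also have "cov M (eps s) (D (s - int (Suc h))) = 0" by (rule orth) simp
    finally show ?case using Suc by simp
  qed
  have g0eq: "g0 * (1 - rho\<^sup>2) = sigma\<^sup>2"
  proof -
    have a: "cov M (D t) (eps t) = sigma\<^sup>2"
      using ar[OF le, of t t] orth[of "t - 1" t] ceps2 P.cov_sym[of "D (t-1)" "eps t"] by simp
    have b: "cov M (D (t - 1)) (D t) = rho * g0" using gam[of t 1] P.cov_sym[of "D (t-1)" "D t"] by simp
    have "g0 = rho * cov M (D (t - 1)) (D t) + cov M (eps t) (D t)"
      using ar[OF lD, of t t] g0s by simp
    then have "g0 = rho * (rho * g0) + sigma\<^sup>2" using a b P.cov_sym[of "eps t" "D t"] by simp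
    then show ?thesis by (simp add: power2_eq_square algebra_simps)
  qed
  have g0pos: "g0 > 0"
  proof -
    have "rho\<^sup>2 < 1" using rho by (simp add: abs_square_less_1)
    moreover have "sigma\<^sup>2 > 0" using sigma by simp
    ultimately have "g0 * (1 - rho\<^sup>2) > 0" "1 - rho\<^sup>2 > 0" using g0eq by auto
    then show ?thesis by (simp add: zero_less_mult_iff)
  qed
  define a where "a = real L / real n"
  have Lh: "Lhat m Lplus Lt s \<omega> = real L" for s \<omega>
    unfolding Lhat_def Lt_det using m by simp
  have q: "order_q n m Lplus D Lt t = (\<lambda>\<omega>. 0 + (1 + a) * D (t - 1) \<omega> + (-a) * D (t - 1 - int n) \<omega>)"
  proof (rule ext)
    fix \<omega>
    have s: "(\<Sum>i=1..n. D (t - 1 - int i) \<omega>) = (\<Sum>i=1..n. (\<lambda>i. D (t - int i) \<omega>) (Suc i))"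
      by (simp add: algebra_simps)
    have d: "(\<Sum>i=1..n. D (t - int i) \<omega>) - (\<Sum>i=1..n. D (t - 1 - int i) \<omega>) = D (t - 1) \<omega> - D (t - 1 - int n) \<omega>"
      using tele[of "\<lambda>i. D (t - int i) \<omega>" n] s by (simp add: algebra_simps)
    have "order_q n m Lplus D Lt t \<omega> = a * ((\<Sum>i=1..n. D (t - int i) \<omega>) - (\<Sum>i=1..n. D (t - 1 - int i) \<omega>)) + D (t - 1) \<omega>"
      unfolding order_q_def Lh Dhat_def a_def by (simp add: algebra_simps diff_diff_eq)
    then show "order_q n m Lplus D Lt t \<omega> = 0 + (1 + a) * D (t - 1) \<omega> + (-a) * D (t - 1 - int n) \<omega>"
      unfolding d by (simp add: algebra_simps)
  qed
  define Q where "Q = (\<lambda>\<omega>. 0 + (1 + a) * D (t - 1) \<omega> + (-a) * D (t - 1 - int n) \<omega>)"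
  have lQ: "P.l2 Q" unfolding Q_def by (rule P.l2_lin[OF lD lD])
  have gn: "cov M (D (t - 1)) (D (t - 1 - int n)) = rho ^ n * g0" using gam[of "t - 1" n] by simp
  have c1: "cov M Q (D (t - 1)) = (1 + a) * g0 - a * rho ^ n * g0"
    unfolding Q_def using P.cov_lin[OF lD lD lD, of 0 "1 + a" "t - 1" "-a" "t - 1 - int n" "t - 1"]
      g0s P.cov_sym[of "D (t - 1 - int n)" "D (t - 1)"] gn by simp
  have c2: "cov M Q (D (t - 1 - int n)) = (1 + a) * rho ^ n * g0 - a * g0"
    unfolding Q_def using P.cov_lin[OF lD lD lD, of 0 "1 + a" "t - 1" "-a" "t - 1 - int n" "t - 1 - int n"]
      g0s gn by simp
  have vQ: "cov M Q Q = (1 + a) * ((1 + a) * g0 - a * rho ^ n * g0) - a * ((1 + a) * rho ^ n * g0 - a * g0)"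
  proof -
    have "cov M Q Q = (1 + a) * cov M (D (t - 1)) Q + (-a) * cov M (D (t - 1 - int n)) Q"
      using P.cov_lin[OF lD lD lQ, of 0 "1 + a" "t - 1" "-a" "t - 1 - int n"] unfolding Q_def by simp
    also have "\<dots> = (1 + a) * cov M Q (D (t - 1)) + (-a) * cov M Q (D (t - 1 - int n))"
      using P.cov_sym[of Q "D (t - 1)"] P.cov_sym[of Q "D (t - 1 - int n)"] by simp
    finally show ?thesis unfolding c1 c2 by simp
  qed
  have "P.variance (order_q n m Lplus D Lt t) / P.variance (D t) = cov M Q Q / g0"
    unfolding q Q_def[symmetric] P.var_cov g0s ..
  also have "\<dots> = (1 + a)\<^sup>2 + a\<^sup>2 - 2 * a * (1 + a) * rho ^ n"
    unfolding vQ using g0pos by (simp add: field_simps power2_eq_square)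
  also have "\<dots> = (2 * real L ^ 2 / real n ^ 2 + 2 * real L / real n) * (1 - rho ^ n) + 1"
    unfolding a_def using n by (simp add: field_simps power2_eq_square)
  finally show ?thesis .
qed
end
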